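(* For $\tau\in[0,\tfrac12]$, $$R(\tau)\le \frac12\left(1+\mathsf{h}\!\left(\tfrac12-\tau\right)-\left(\tfrac12+\tau\right)\mathsf{h}\!\left(\frac{2\tau}{\frac12+\tau}\right)\right),$$ where $\mathsf{h}(\xi)=-\xi\log_2\xi-(1-\xi)\log_2(1-\xi)$ is the binary entropy function.
   Context: A grain pattern of length $n$ is a subset $E\subseteq\{2,\dots,n\}$ containing no two consecutive integers. For such $E$, $\phi_E:\{0,1\}^n\to\{0,1\}^n$ sends $\mathbf{x}$ to $\mathbf{y}$ with $y_j=x_{j-1}$ if $j\in E$ and $y_j=x_j$ otherwise. $\Phi_t(\mathbf{x})=\{\phi_E(\mathbf{x}): E \text{ a grain pattern of length } n,\ |E|\le t\}$. A code $\mathcal{C}\subseteq\{0,1\}^n$ is $t$-grain-correcting if for any two distinct codewords $\mathbf{x}_1,\mathbf{x}_2$ one has $\Phi_t(\mathbf{x}_1)\cap\Phi_t(\mathbf{x}_2)=\emptyset$. $M(n,t)$ is the maximum cardinality of a $t$-grain-correcting code of length $n$, and $R(\tau)=\limsup_{n\to\infty}\frac1n\log_2 M(n,\lceil\tau n\rceil)$. *)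

theory Defs
  imports Complex_Main "HOL-Library.Extended_Real" "HOL-Library.Liminf_Limsup"
begin

(* Binary words of length n are lists of booleans of length n; position j (1-based,
   as in the paper) is the list entry xs ! (j - 1). *)
definition words :: "nat \<Rightarrow> bool list set" where
  "words n = {xs. length xs = n}"

definition grain_pattern :: "nat \<Rightarrow> nat set \<Rightarrow> bool" where
  "grain_pattern n E \<longleftrightarrow> E \<subseteq> {2..n} \<and> (\<forall>j\<in>E. Suc j \<notin> E)"

(* phi_E: y_j = x_{j-1} if j \<in> E, else y_j = x_j  (1-based j = 1..n) *)
definition phi :: "nat set \<Rightarrow> bool list \<Rightarrow> bool list" where
  "phi E xs = map (\<lambda>j. if j \<in> E then xs ! (j - 2) else xs ! (j - 1)) [1..<length xs + 1]"

definition Phi :: "nat \<Rightarrow> nat \<Rightarrow> bool list \<Rightarrow> bool list set" where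
  "Phi n t xs = {phi E xs | E. grain_pattern n E \<and> card E \<le> t}"

definition grain_correcting :: "nat \<Rightarrow> nat \<Rightarrow> bool list set \<Rightarrow> bool" where
  "grain_correcting n t C \<longleftrightarrow> C \<subseteq> words n \<and>
     (\<forall>x1\<in>C. \<forall>x2\<in>C. x1 \<noteq> x2 \<longrightarrow> Phi n t x1 \<inter> Phi n t x2 = {})"

definition M :: "nat \<Rightarrow> nat \<Rightarrow> nat" where
  "M n t = Max {card C | C. grain_correcting n t C}"

definition R :: "real \<Rightarrow> ereal" where
  "R \<tau> = limsup (\<lambda>n. ereal (log 2 (real (M n (nat \<lceil>\<tau> * real n\<rceil>))) / real n))"

definition h :: "real \<Rightarrow> real" where
  "h \<xi> = (if \<xi> = 0 \<or> \<xi> = 1 then 0 else - \<xi> * log 2 \<xi> - (1 - \<xi>) * log 2 (1 - \<xi>))"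

end

theory Submission
  imports Defs "HOL-Real_Asymp.Real_Asymp"
begin


definition nc :: "nat \<Rightarrow> bool list \<Rightarrow> nat set" where
  "nc m x = {i. i < m \<and> x!(2*i) \<noteq> x!(2*i+1)}"
definition EE :: "nat set \<Rightarrow> nat set" where
  "EE S = (\<lambda>i. 2*i+2) ` S"

lemma phi_len[simp]: "length (phi E x) = length x"
  unfolding phi_def length_map length_upt by simp

lemma EE_iff: "Suc j \<in> EE S \<longleftrightarrow> odd j \<and> j div 2 \<in> S"
  unfolding EE_def by (auto elim!: oddE)

lemma phi_nth: "j < length x \<Longrightarrow> phi (EE S) x ! j = (if odd j \<and> j div 2 \<in> S then x!(j-1) else x!j)"
  unfolding phi_def using EE_iff[of j S] by (simp add: nth_upt del: upt_Suc)

lemma phi_even: "2*i < length x \<Longrightarrow> phi (EE S) x ! (2*i) = x!(2*i)"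
  by (simp add: phi_nth)
lemma phi_odd: "Suc (2*i) < length x \<Longrightarrow> phi (EE S) x ! Suc (2*i) = (if i \<in> S then x!(2*i) else x!Suc(2*i))"
  by (simp add: phi_nth)

lemma nc_phi: "2*m \<le> length x \<Longrightarrow> nc m (phi (EE S) x) = nc m x - S"
  unfolding nc_def by (auto simp: phi_even phi_odd split: if_splits)

lemma nc_sub: "nc m x \<subseteq> {..<m}" unfolding nc_def by auto

lemma grain_EE: "S \<subseteq> {..<m} \<Longrightarrow> 2*m \<le> n \<Longrightarrow> grain_pattern n (EE S)"
  unfolding grain_pattern_def EE_def by auto presburger

lemma card_EE: "card (EE S) = card S"
  unfolding EE_def by (rule card_image) (auto simp: inj_on_def)

lemma phi_inj_S:
  assumes "S \<subseteq> nc m x" "S' \<subseteq> nc m x" "2*m \<le> length x" "phi (EE S) x = phi (EE S') x"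
  shows "S = S'"
proof (rule ccontr)
  assume "S \<noteq> S'"
  then obtain i where i: "i \<in> S \<and> i \<notin> S' \<or> i \<in> S' \<and> i \<notin> S" by blast
  then have "i \<in> nc m x" using assms by auto
  hence im: "i < m" "x!(2*i) \<noteq> x!(2*i+1)" by (auto simp: nc_def)
  have "phi (EE S) x ! (2*i+1) = phi (EE S') x ! (2*i+1)" using assms(4) by simp
  thus False using i im assms(3) by (auto simp: phi_odd split: if_splits)
qed

lemma recon:
  assumes "length y = n" "length y' = n" "2*m \<le> n" "nc m y = nc m y'"
    "phi (EE (nc m y)) y = phi (EE (nc m y')) y'"
  shows "y = y'"
proof (rule nth_equalityI)
  show "length y = length y'" using assms by simp
  fix j assume j: "j < length y"
  show "y!j = y'!j"
  proof (cases "j < 2*m")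
    case False
    have "phi (EE (nc m y)) y ! j = phi (EE (nc m y')) y' ! j" using assms(5) by simp
    moreover have "\<not> j div 2 < m" using False by presburger
    hence "j div 2 \<notin> nc m y'" by (simp add: nc_def)
    ultimately show ?thesis using False j assms by (simp add: phi_nth)
  next
    case True
    define i where "i = j div 2"
    have im: "i < m" using True i_def by simp
    have e: "y!(2*i) = y'!(2*i)"
      using arg_cong[OF assms(5), of "\<lambda>l. l!(2*i)"] im assms by (simp add: phi_even)
    have o: "y!(2*i+1) = y'!(2*i+1)"
    proof (cases "i \<in> nc m y")
      case True
      then have "i \<in> nc m y'" using assms by simp
      then show ?thesis using True e by (simp add: nc_def)
    next
      case False
      then have "i \<notin> nc m y'" using assms by simp
      then show ?thesis using False arg_cong[OF assms(5), of "\<lambda>l. l!(2*i+1)"] im assms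
        by (simp add: phi_odd)
    qed
    have "j = 2*i \<or> j = 2*i+1" using i_def by auto
    then show ?thesis using e o by auto
  qed
qed


lemma card_words: "card (words k) = 2^k"
proof -
  have "words k = {xs. set xs \<subseteq> (UNIV::bool set) \<and> length xs = k}" by (auto simp: words_def)
  thus ?thesis using card_lists_length_eq[of "UNIV::bool set" k] by simp
qed

lemma finite_words: "finite (words k)"
proof -
  have "words k = {xs. set xs \<subseteq> (UNIV::bool set) \<and> length xs = k}" by (auto simp: words_def)
  thus ?thesis using finite_lists_length_eq[of "UNIV::bool set" k] by simp
qed

definition Zs :: "nat \<Rightarrow> nat \<Rightarrow> bool list set" where
  "Zs n m = {z \<in> words n. nc m z = {}}"

lemma card_Z: assumes "2*m \<le> n" shows "card (Zs n m) \<le> 2^(n-m)"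
proof -
  define g where "g z = map (\<lambda>i. z!(2*i)) [0..<m] @ drop (2*m) z" for z :: "bool list"
  have "inj_on g (Zs n m)"
  proof
    fix z z' assume z: "z \<in> Zs n m" and z': "z' \<in> Zs n m" and eq: "g z = g z'"
    have lz: "length z = n" "length z' = n" using z z' by (auto simp: Zs_def words_def)
    show "z = z'"
    proof (rule nth_equalityI)
      show "length z = length z'" using lz by simp
      fix j assume j: "j < length z"
      show "z!j = z'!j"
      proof (cases "j < 2*m")
        case True
        define i where "i = j div 2"
        have im: "i < m" using True i_def by simp
        have e: "z!(2*i) = z'!(2*i)"
          using arg_cong[OF eq, of "\<lambda>l. l!i"] im by (simp add: g_def nth_append)
        have "i \<notin> nc m z" "i \<notin> nc m z'" using z z' by (auto simp: Zs_def)
        hence o: "z!Suc(2*i) = z'!Suc(2*i)" using e im by (auto simp: nc_def)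
        have "j = 2*i \<or> j = Suc (2*i)" using i_def by auto
        then show ?thesis using e o by auto
      next
        case False
        have gz: "g w ! (j - m) = w ! j" if "length w = n" for w
        proof -
          have "g w ! (j - m) = drop (2*m) w ! (j - m - m)"
            using False by (simp add: g_def nth_append)
          also have "\<dots> = w ! j" using False j lz that by simp
          finally show ?thesis .
        qed
        show ?thesis using gz[of z] gz[of z'] lz eq by simp
      qed
    qed
  qed
  moreover have "g ` Zs n m \<subseteq> words (n-m)"
    using assms by (auto simp: g_def words_def Zs_def)
  ultimately have "card (Zs n m) \<le> card (words (n-m))"
    using card_inj_on_le finite_words by blast
  thus ?thesis by (simp add: card_words)
qed


lemma class_bound:
  assumes gc: "grain_correcting n t C" and mn: "2*m \<le> n" and st: "s \<le> t" and sa: "s \<le> a"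
  shows "card {x\<in>C. card (nc m x) = a} * (a choose s) \<le> (m choose (a-s)) * 2^(n-m)"
proof -
  define Ca where "Ca = {x\<in>C. card (nc m x) = a}"
  define P where "P = Sigma Ca (\<lambda>x. {S. S \<subseteq> nc m x \<and> card S = s})"
  have Cw: "C \<subseteq> words n" using gc by (simp add: grain_correcting_def)
  have finCa: "finite Ca" using Cw finite_words unfolding Ca_def by (auto intro: finite_subset)
  have finnc: "finite (nc m x)" for x using nc_sub finite_subset by blast
  have "card P = (\<Sum>x\<in>Ca. card {S. S \<subseteq> nc m x \<and> card S = s})"
    unfolding P_def using finCa finnc by (simp add: card_SigmaI)
  also have "\<dots> = (\<Sum>x\<in>Ca. a choose s)"
    by (rule sum.cong) (auto simp: n_subsets finnc Ca_def)
  finally have cP: "card P = card Ca * (a choose s)" by simp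
  define F where "F = (\<lambda>(x,S). (nc m (phi (EE S) x), phi (EE (nc m (phi (EE S) x))) (phi (EE S) x)))"
  define T where "T = {U. U \<subseteq> {..<m} \<and> card U = a-s} \<times> Zs n m"
  have lenC: "x \<in> C \<Longrightarrow> length x = n" for x using Cw by (auto simp: words_def)
  have "F ` P \<subseteq> T"
  proof
    fix p assume "p \<in> F ` P"
    then obtain x S where xS: "(x,S) \<in> P" and p: "p = F (x,S)" by auto
    have x: "x \<in> C" "card (nc m x) = a" and S: "S \<subseteq> nc m x" "card S = s"
      using xS by (auto simp: P_def Ca_def)
    have l: "length x = n" using lenC x by simp
    have "nc m (phi (EE S) x) = nc m x - S" using nc_phi mn l by simp
    hence c1: "card (nc m (phi (EE S) x)) = a - s" using S x card_Diff_subset[of S "nc m x"] finite_subset[OF S(1) finnc] by simp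
    have "nc m (phi (EE (nc m (phi (EE S) x))) (phi (EE S) x)) = {}"
      using nc_phi[of m "phi (EE S) x"] mn l by simp
    thus "p \<in> T" using c1 p l unfolding T_def F_def Zs_def words_def
      using nc_sub[of m "phi (EE S) x"] by auto
  qed
  moreover have "inj_on F P"
  proof (rule inj_onI)
    fix p q assume p: "p \<in> P" and q: "q \<in> P" and eq: "F p = F q"
    obtain x S where pxS: "p = (x,S)" by (cases p)
    obtain x' S' where qxS: "q = (x',S')" by (cases q)
    have x: "x \<in> C" and S: "S \<subseteq> nc m x" "card S = s" using p pxS by (auto simp: P_def Ca_def)
    have x': "x' \<in> C" and S': "S' \<subseteq> nc m x'" "card S' = s" using q qxS by (auto simp: P_def Ca_def)
    have l: "length x = n" "length x' = n" using lenC x x' by auto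
    have eq2: "nc m (phi (EE S) x) = nc m (phi (EE S') x') \<and> phi (EE (nc m (phi (EE S) x))) (phi (EE S) x) = phi (EE (nc m (phi (EE S') x'))) (phi (EE S') x')"
      using eq unfolding pxS qxS F_def case_prod_conv prod.inject .
    have y: "phi (EE S) x = phi (EE S') x'"
      by (rule recon[of _ n _ m]) (use l mn eq2 in auto)
    have g1: "grain_pattern n (EE S)" using grain_EE S nc_sub mn by blast
    have g2: "grain_pattern n (EE S')" using grain_EE S' nc_sub mn by blast
    have "phi (EE S) x \<in> Phi n t x" using g1 S st unfolding Phi_def by (auto simp: card_EE)
    moreover have "phi (EE S) x \<in> Phi n t x'" using g2 S' st y unfolding Phi_def by (auto simp: card_EE)
    ultimately have "x = x'" using gc x x' unfolding grain_correcting_def by blast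
    moreover have "S = S'" using phi_inj_S[of S m x S'] y S S' \<open>x = x'\<close> l mn by auto
    ultimately show "p = q" using pxS qxS by simp
  qed
  moreover have "finite T" unfolding T_def Zs_def using finite_words by auto
  ultimately have "card P \<le> card T" using card_inj_on_le by blast
  also have "card T = (m choose (a-s)) * card (Zs n m)"
    unfolding T_def by (simp add: card_cartesian_product n_subsets[of "{..<m}", simplified])
  also have "\<dots> \<le> (m choose (a-s)) * 2^(n-m)" using card_Z mn by simp
  finally show ?thesis using cP Ca_def by simp
qed



lemma binom_step: "(m choose Suc k) * Suc k = (m choose k) * (m - k)"
  using times_binomial_minus1_eq[of "Suc k" m] binomial_absorb_comp[of m k]
  by (simp add: mult.commute)

lemma binom_term_le1:
  fixes p :: real assumes "0 \<le> p" "p \<le> 1" "k \<le> m"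
  shows "real (m choose k) * p^k * (1-p)^(m-k) \<le> 1"
proof -
  have "(p + (1-p))^m = (\<Sum>i\<le>m. real (m choose i) * p^i * (1-p)^(m-i))"
    by (rule binomial_ring)
  hence s: "(\<Sum>i\<le>m. real (m choose i) * p^i * (1-p)^(m-i)) = 1" by simp
  have "real (m choose k) * p^k * (1-p)^(m-k) \<le> (\<Sum>i\<le>m. real (m choose i) * p^i * (1-p)^(m-i))"
    by (rule member_le_sum) (use assms in auto)
  thus ?thesis using s by simp
qed

lemma log_term:
  fixes m k :: nat assumes "0 < k" "k < m"
  defines "p \<equiv> real k / real m"
  shows "log 2 (p^k * (1-p)^(m-k)) = - real m * h p"
proof -
  have p: "0 < p" "p < 1" using assms by (auto simp: p_def)
  have mp: "real m * p = real k" "real m * (1 - p) = real (m - k)"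
    using assms by (auto simp: p_def field_simps of_nat_diff)
  have "log 2 (p^k * (1-p)^(m-k)) = real k * log 2 p + real (m-k) * log 2 (1-p)"
    using p by (simp add: log_mult log_nat_power)
  also have "\<dots> = - real m * h p"
  proof -
    have hp: "h p = - p * log 2 p - (1-p)*log 2 (1-p)" using p by (simp add: h_def)
    have "- real m * h p = (real m * p) * log 2 p + (real m * (1-p)) * log 2 (1-p)"
      unfolding hp by (simp add: algebra_simps)
    thus ?thesis using mp by simp
  qed
  finally show ?thesis .
qed

lemma E1:
  assumes "k \<le> m"
  shows "log 2 (real (m choose k)) \<le> real m * h (real k / real m)"
proof (cases "0 < k \<and> k < m")
  case False
  hence "k = 0 \<or> k = m" using assms by auto
  moreover have "h 0 = 0" "h 1 = 0" by (simp_all add: h_def)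
  ultimately show ?thesis using assms by (cases "m = 0") auto
next
  case True
  define p where "p = real k / real m"
  have p: "0 < p" "p < 1" using True by (auto simp: p_def)
  have "real (m choose k) * (p^k * (1-p)^(m-k)) \<le> 1"
    using binom_term_le1[of p k m] p assms by (simp add: mult.assoc)
  hence "log 2 (real (m choose k) * (p^k * (1-p)^(m-k))) \<le> 0"
    using p True by (subst log_le_zero_cancel_iff) auto
  moreover have "real (m choose k) > 0" using assms by simp
  ultimately have "log 2 (real (m choose k)) + log 2 (p^k * (1-p)^(m-k)) \<le> 0"
    using p by (simp add: log_mult)
  thus ?thesis using log_term[of k m] True p_def by simp
qed

lemma mode:
  fixes a t :: nat assumes t0: "0 < t" and ta: "t < a" and k: "k \<le> a"
  defines "p \<equiv> real t / real a"
  defines "T \<equiv> \<lambda>k. real (a choose k) * p^k * (1-p)^(a-k)"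
  shows "T k \<le> T t"
proof -
  have p: "0 < p" "p < 1" using t0 ta by (auto simp: p_def)
  have Tnn: "0 \<le> T j" for j using p by (simp add: T_def)
  have step: "T (Suc j) * (Suc j) * (real a - t) = T j * (real a - j) * t" if j: "j < a" for j
  proof -
    have q: "(1-p)^(a-j) = (1-p)^(a - Suc j) * (1-p)"
      using j by (metis Suc_diff_Suc power_Suc2)
    have b: "real (a choose Suc j) * Suc j = real (a choose j) * (real a - j)"
      using binom_step[of a j] j by (metis of_nat_diff of_nat_mult less_imp_le)
    have "T (Suc j) * (Suc j) * (1 - p) = T j * (real a - j) * p"
    proof -
      have "T (Suc j) * (Suc j) * (1 - p) = (real (a choose Suc j) * Suc j) * p * (p^j * ((1-p)^(a - Suc j) * (1-p)))"
        by (simp add: T_def algebra_simps)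
      also have "\<dots> = T j * (real a - j) * p" unfolding b q[symmetric] by (simp add: T_def algebra_simps)
      finally show ?thesis .
    qed
    hence "T (Suc j) * (Suc j) * ((1 - p) * real a) = T j * (real a - j) * (p * real a)"
      by (metis mult.assoc)
    moreover have "(1 - p) * real a = real a - t" "p * real a = t" using ta by (auto simp: p_def field_simps)
    ultimately show ?thesis by simp
  qed
  have inc: "T j \<le> T (Suc j)" if "j < t" for j
  proof -
    have e: "(real a - j)*t - (j+1)*(real a - t) = real a*(real t-j-1) + t" by (simp add: algebra_simps)
    have "0 \<le> real a*(real t-j-1)" using that by simp
    hence "(j+1)*(real a - t) \<le> (real a - j)*t" using e by linarith
    hence "T j * ((j+1)*(real a - t)) \<le> T j * ((real a - j)*t)" by (rule mult_left_mono[OF _ Tnn])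
    hence "T j * ((j+1)*(real a - t)) \<le> T (Suc j) * ((j+1)*(real a - t))"
      using step[of j] that ta by (simp add: algebra_simps)
    moreover have "0 < (j+1)*(real a - t)" using ta by simp
    ultimately show ?thesis by (rule mult_right_le_imp_le)
  qed
  have dec: "T (Suc j) \<le> T j" if "t \<le> j" "j < a" for j
  proof -
    have e: "(j+1)*(real a - t) - (real a - j)*t = real a*(real j-t) + (real a - t)" by (simp add: algebra_simps)
    have "0 \<le> real a*(real j-t)" using that by simp
    hence "(real a - j)*t \<le> (j+1)*(real a - t)" using e ta by linarith
    hence "T j * ((real a - j)*t) \<le> T j * ((j+1)*(real a - t))" by (rule mult_left_mono[OF _ Tnn])
    hence "T (Suc j) * ((j+1)*(real a - t)) \<le> T j * ((j+1)*(real a - t))"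
      using step[of j] that by (simp add: algebra_simps)
    moreover have "0 < (j+1)*(real a - t)" using ta by simp
    ultimately show ?thesis by (rule mult_right_le_imp_le)
  qed
  show ?thesis
  proof (cases "k \<le> t")
    case True
    have "T k \<le> T j" if "k \<le> j" "j \<le> t" for j
      using that
    proof (induction j rule: dec_induct)
      case base thus ?case by simp
    next
      case (step j) thus ?case using inc[of j] by simp
    qed
    thus ?thesis using True by simp
  next
    case False
    have "T j \<le> T t" if "t \<le> j" "j \<le> k" for j
      using that
    proof (induction j rule: dec_induct)
      case base thus ?case by simp
    next
      case (step j) thus ?case using dec[of j] k by simp
    qed
    thus ?thesis using False by simp
  qed
qed

lemma E2:
  assumes "t \<le> a" "0 < a"
  shows "real a * h (real t / real a) - log 2 (real a + 1) \<le> log 2 (real (a choose t))"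
proof (cases "0 < t \<and> t < a")
  case False
  hence "t = 0 \<or> t = a" using assms by auto
  moreover have "h 0 = 0" "h 1 = 0" by (simp_all add: h_def)
  ultimately show ?thesis using assms by auto
next
  case True
  define p where "p = real t / real a"
  define T where "T = (\<lambda>k. real (a choose k) * p^k * (1-p)^(a-k))"
  have p: "0 < p" "p < 1" using True by (auto simp: p_def)
  have "(p + (1-p))^a = (\<Sum>i\<le>a. T i)" unfolding T_def by (rule binomial_ring)
  hence "1 = (\<Sum>i\<le>a. T i)" by simp
  also have "\<dots> \<le> (\<Sum>i\<le>a. T t)"
    by (rule sum_mono) (use mode[of t a] True in \<open>auto simp: T_def p_def\<close>)
  finally have "1 \<le> (real a + 1) * T t" by (simp add: algebra_simps)
  hence "1 / (real a + 1) \<le> T t" by (simp add: field_simps)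
  moreover have "0 < 1 / (real a + 1)" by simp
  ultimately have "0 < T t" by linarith
  hence "log 2 (1 / (real a + 1)) \<le> log 2 (T t)"
    using \<open>1 / (real a + 1) \<le> T t\<close> by (subst log_le_cancel_iff) auto
  moreover have "log 2 (1 / (real a + 1)) = - log 2 (real a + 1)"
    using assms by (simp add: log_divide)
  moreover have "log 2 (T t) = log 2 (real (a choose t)) + log 2 (p^t * (1-p)^(a-t))"
    unfolding T_def using p assms by (simp add: log_mult mult.assoc)
  ultimately show ?thesis using log_term[of t a] True p_def by simp
qed



definition fB :: "nat \<Rightarrow> nat \<Rightarrow> nat \<Rightarrow> real" where
  "fB m t a = real (m choose (a - t)) / real (a choose t)"

lemma div_div_cancel: "(d::real) \<noteq> 0 \<Longrightarrow> (P/d)/(Q/d) = P/Q"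
  by (cases "Q = 0") (simp_all add: field_simps)

lemma mul_helper: "(c::real) > 0 \<Longrightarrow> X*W/(c*Y)*c = X/Y*W"
  by (cases "Y = 0") (simp_all add: field_simps)

lemma fB_step:
  assumes "t \<le> a" "a \<le> m"
  shows "fB m t (Suc a) * (real a + 1) = fB m t a * (real m + t - a)"
proof -
  define X where "X = real (m choose (a - t))"
  define Y where "Y = real (a choose t)"
  have Y: "Y > 0" using assms by (simp add: Y_def)
  have e: "Suc a - t = Suc (a - t)" using assms by simp
  have r1: "real (m choose (Suc a - t)) * (real a - t + 1) = X * (real m - a + t)"
  proof -
    have h1: "real (m choose Suc (a - t)) * real (Suc (a - t)) = X * real (m - (a - t))"
      using binom_step[of m "a - t"] unfolding X_def by (metis of_nat_mult)
    have h2: "real (Suc (a - t)) = real a - t + 1" using assms by (simp add: of_nat_diff)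
    have h3: "real (m - (a - t)) = real m - a + t" using assms by (simp add: of_nat_diff)
    show ?thesis using h1 unfolding e h2 h3 .
  qed
  have r2: "real (Suc a choose t) * (real a - t + 1) = (real a + 1) * Y"
  proof -
    have "(Suc a - t) * (Suc a choose t) = Suc a * (a choose t)" using binomial_absorb_comp[of "Suc a" t] by simp
    hence h1: "real (Suc a - t) * real (Suc a choose t) = real (Suc a) * Y" unfolding Y_def by (metis of_nat_mult)
    have h2: "real (Suc a - t) = real a - t + 1" using assms by (simp add: of_nat_diff)
    show ?thesis using h1 unfolding h2 by (simp add: algebra_simps)
  qed
  have pos: "real a - t + 1 > 0" using assms by simp
  have c1: "real (m choose (Suc a - t)) = X * (real m - a + t) / (real a - t + 1)"
    using r1 pos by (simp add: eq_divide_eq)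
  have c2: "real (Suc a choose t) = (real a + 1) * Y / (real a - t + 1)"
    using r2 pos by (simp add: eq_divide_eq)
  have "fB m t (Suc a) = real (m choose (Suc a - t)) / real (Suc a choose t)" by (simp add: fB_def)
  also have "\<dots> = X * (real m - a + t) / ((real a + 1) * Y)" unfolding c1 c2 using pos by (intro div_div_cancel) simp
  finally have f: "fB m t (Suc a) = X * (real m - a + t) / ((real a + 1) * Y)" .
  have f0: "fB m t a = X / Y" by (simp add: fB_def X_def Y_def)
  have w: "real m + t - a = real m - a + t" by simp
  show ?thesis unfolding f f0 w by (rule mul_helper) simp
qed

lemma fB_nonneg: "0 \<le> fB m t a" by (simp add: fB_def)

lemma fB_le:
  assumes "t \<le> a" "a \<le> m"
  shows "fB m t a \<le> fB m t ((m + t) div 2)"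
proof -
  define a0 where "a0 = (m + t) div 2"
  have inc: "fB m t j \<le> fB m t (Suc j)" if "t \<le> j" "j < a0" for j
  proof -
    have jm: "j \<le> m" using that a0_def by simp
    have "real j + 1 \<le> real m + t - j" using that a0_def by simp
    hence "fB m t j * (real j + 1) \<le> fB m t j * (real m + t - j)" by (rule mult_left_mono[OF _ fB_nonneg])
    also have "\<dots> = fB m t (Suc j) * (real j + 1)" using fB_step[OF that(1) jm] by simp
    finally show ?thesis by (rule mult_right_le_imp_le) simp
  qed
  have dec: "fB m t (Suc j) \<le> fB m t j" if "a0 \<le> j" "j < m" for j
  proof -
    have tj: "t \<le> j" using that a0_def by simp
    have "real m + t - j \<le> real j + 1" using that a0_def by simp
    hence "fB m t j * (real m + t - j) \<le> fB m t j * (real j + 1)" by (rule mult_left_mono[OF _ fB_nonneg])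
    hence "fB m t (Suc j) * (real j + 1) \<le> fB m t j * (real j + 1)" using fB_step[OF tj] that by simp
    thus ?thesis by (rule mult_right_le_imp_le) simp
  qed
  show ?thesis
  proof (cases "a \<le> a0")
    case True
    have "fB m t a \<le> fB m t j" if "a \<le> j" "j \<le> a0" for j
      using that
    proof (induction j rule: dec_induct)
      case base thus ?case by simp
    next
      case (step j) thus ?case using inc[of j] assms by simp
    qed
    thus ?thesis using True a0_def by simp
  next
    case False
    have "fB m t j \<le> fB m t a0" if "a0 \<le> j" "j \<le> a" for j
      using that
    proof (induction j rule: dec_induct)
      case base thus ?case by simp
    next
      case (step j) thus ?case using dec[of j] assms by simp
    qed
    thus ?thesis using False a0_def by simp
  qed
qed

lemma code_bound:
  assumes gc: "grain_correcting n t C" and mn: "2*m \<le> n" and tm: "t \<le> m"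
  shows "real (card C) \<le> (real m + 1) * 2^(n-m) * fB m t ((m + t) div 2)"
proof -
  define B where "B = fB m t ((m + t) div 2)"
  have B1: "1 \<le> B" using fB_le[of t t m] tm by (simp add: B_def fB_def)
  define Ca where "Ca a = {x\<in>C. card (nc m x) = a}" for a
  have each: "real (card (Ca a)) \<le> 2^(n-m) * B" if "a \<le> m" for a
  proof -
    define s where "s = min a t"
    have cb: "card (Ca a) * (a choose s) \<le> (m choose (a-s)) * 2^(n-m)"
      unfolding Ca_def by (rule class_bound[OF gc mn]) (auto simp: s_def)
    have pos: "real (a choose s) > 0" by (simp add: s_def)
    have "real (card (Ca a)) * real (a choose s) \<le> real (m choose (a-s)) * 2^(n-m)"
      using cb by (metis of_nat_le_iff of_nat_mult of_nat_numeral of_nat_power)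
    hence "real (card (Ca a)) \<le> 2^(n-m) * (real (m choose (a-s)) / real (a choose s))"
      using pos by (simp add: field_simps)
    also have "real (m choose (a-s)) / real (a choose s) \<le> B"
    proof (cases "t \<le> a")
      case True
      hence "real (m choose (a-s)) / real (a choose s) = fB m t a" by (simp add: s_def fB_def)
      thus ?thesis using fB_le[OF True that] B_def by simp
    next
      case False
      thus ?thesis using B1 by (simp add: s_def)
    qed
    hence "2^(n-m) * (real (m choose (a-s)) / real (a choose s)) \<le> 2^(n-m) * B" by (rule mult_left_mono) simp
    finally show ?thesis .
  qed
  have "C \<subseteq> (\<Union>a\<in>{..m}. Ca a)"
  proof
    fix x assume "x \<in> C"
    have "card (nc m x) \<le> card {..<m}" using nc_sub by (rule card_mono[rotated]) simp
    thus "x \<in> (\<Union>a\<in>{..m}. Ca a)" using \<open>x \<in> C\<close> by (auto simp: Ca_def)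
  qed
  hence "card C \<le> card (\<Union>a\<in>{..m}. Ca a)"
    by (rule card_mono[rotated]) (use gc finite_words in \<open>auto simp: Ca_def grain_correcting_def intro: finite_subset\<close>)
  also have "\<dots> \<le> (\<Sum>a\<in>{..m}. card (Ca a))" by (rule card_UN_le) simp
  finally have "real (card C) \<le> (\<Sum>a\<in>{..m}. real (card (Ca a)))" by (metis of_nat_le_iff of_nat_sum)
  also have "\<dots> \<le> (\<Sum>a\<in>{..m}. 2^(n-m) * B)" by (rule sum_mono) (use each in auto)
  also have "\<dots> = (real m + 1) * 2^(n-m) * B" by (simp add: algebra_simps)
  finally show ?thesis by (simp add: B_def)
qed

lemma gc_mono: "grain_correcting n t C \<Longrightarrow> t' \<le> t \<Longrightarrow> grain_correcting n t' C"
  unfolding grain_correcting_def Phi_def by (fastforce)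

lemma M_bound:
  fixes n t :: nat
  defines "m \<equiv> n div 2"
  defines "t' \<equiv> min t m"
  shows "real (M n t) \<le> (real m + 1) * 2^(n-m) * fB m t' ((m + t') div 2)" and "1 \<le> M n t"
proof -
  have fin: "finite {card C | C. grain_correcting n t C}"
  proof -
    have "{card C | C. grain_correcting n t C} \<subseteq> card ` Pow (words n)"
      by (auto simp: grain_correcting_def)
    thus ?thesis using finite_words by (meson finite_Pow_iff finite_imageI finite_subset)
  qed
  have gc1: "grain_correcting n t {replicate n False}"
    by (simp add: grain_correcting_def words_def)
  have ne: "{card C | C. grain_correcting n t C} \<noteq> {}" using gc1 by blast
  obtain C where C: "grain_correcting n t C" "M n t = card C"
    using Max_in[OF fin ne] unfolding M_def by auto
  have "grain_correcting n t' C" using gc_mono[OF C(1)] t'_def by simp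
  thus "real (M n t) \<le> (real m + 1) * 2^(n-m) * fB m t' ((m + t') div 2)"
    using code_bound[of n t' C m] C m_def t'_def by simp
  have "card {replicate n False} \<in> {card C | C. grain_correcting n t C}" using gc1 by blast
  hence "card {replicate n False} \<le> M n t" unfolding M_def using fin by (rule Max_ge[rotated])
  thus "1 \<le> M n t" by simp
qed



lemma h_alt: "x \<in> {0..1} \<Longrightarrow> h x = - x * log 2 x - (1-x) * log 2 (1-x)"
  by (auto simp: h_def)

lemma h_cont: "continuous_on {0..1} h"
proof -
  have "continuous_on {0..1} (\<lambda>x::real. - x * log 2 x - (1-x) * log 2 (1-x))"
  proof (rule continuous_on_IccI)
    show "((\<lambda>x::real. - x * log 2 x - (1-x) * log 2 (1-x)) \<longlongrightarrow> - 0 * log 2 0 - (1-0) * log 2 (1-0)) (at_right 0)"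
      by simp real_asymp
    show "((\<lambda>x::real. - x * log 2 x - (1-x) * log 2 (1-x)) \<longlongrightarrow> - 1 * log 2 1 - (1-1) * log 2 (1-1)) (at_left 1)"
      by simp real_asymp
    fix x :: real assume "0 < x" "x < 1"
    thus "(\<lambda>x::real. - x * log 2 x - (1-x) * log 2 (1-x)) \<midarrow>x\<rightarrow> - x * log 2 x - (1-x) * log 2 (1-x)"
      by (intro tendsto_intros) auto
  qed simp
  thus ?thesis by (rule continuous_on_cong[THEN iffD1, rotated 2]) (auto simp: h_alt)
qed

lemma lin_lim:
  fixes x :: "nat \<Rightarrow> real"
  assumes "\<And>n. \<bar>x n - c * real n\<bar> \<le> K"
  shows "(\<lambda>n. x n / real n) \<longlonglongrightarrow> c"
proof (rule tendsto_sandwich)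
  show "\<forall>\<^sub>F n in sequentially. c - K / real n \<le> x n / real n"
    using eventually_gt_at_top[of 0]
  proof (rule eventually_mono)
    fix n :: nat assume n: "0 < n"
    have "c * real n - K \<le> x n" using assms[of n] by linarith
    hence "(c * real n - K) / real n \<le> x n / real n" using n by (intro divide_right_mono) auto
    thus "c - K / real n \<le> x n / real n" using n by (simp add: field_simps)
  qed
  show "\<forall>\<^sub>F n in sequentially. x n / real n \<le> c + K / real n"
    using eventually_gt_at_top[of 0]
  proof (rule eventually_mono)
    fix n :: nat assume n: "0 < n"
    have "x n \<le> c * real n + K" using assms[of n] by linarith
    hence "x n / real n \<le> (c * real n + K) / real n" using n by (intro divide_right_mono) auto
    thus "x n / real n \<le> c + K / real n" using n by (simp add: field_simps)
  qed
  show "(\<lambda>n. c - K / real n) \<longlonglongrightarrow> c" by real_asymp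
  show "(\<lambda>n. c + K / real n) \<longlonglongrightarrow> c" by real_asymp
qed

lemma log_lim:
  fixes y :: "nat \<Rightarrow> nat"
  assumes "\<And>n. y n \<le> n"
  shows "(\<lambda>n. log 2 (real (y n) + 1) / real n) \<longlonglongrightarrow> 0"
proof (rule tendsto_sandwich)
  show "\<forall>\<^sub>F n in sequentially. 0 \<le> log 2 (real (y n) + 1) / real n" by simp
  show "\<forall>\<^sub>F n in sequentially. log 2 (real (y n) + 1) / real n \<le> log 2 (real n + 1) / real n"
    by (rule always_eventually) (use assms in \<open>auto intro!: divide_right_mono\<close>)
  show "(\<lambda>n. 0::real) \<longlonglongrightarrow> 0" by simp
  show "(\<lambda>n. log 2 (real n + 1) / real n) \<longlonglongrightarrow> 0" by real_asymp
qed



lemma aux_a: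
  fixes A Mm Tt N T :: real
  shows "2*A \<le> Mm + Tt \<Longrightarrow> Mm + Tt \<le> 2*A + 1 \<Longrightarrow> \<bar>Mm - 1/2*N\<bar> \<le> 1 \<Longrightarrow> \<bar>Tt - T\<bar> \<le> 1
    \<Longrightarrow> \<bar>A - (1/2*N + T)/2\<bar> \<le> 2"
  by (simp add: abs_le_iff field_simps)

lemma aux_b:
  fixes A Tt N T :: real
  shows "\<bar>A - (1/2*N + T)/2\<bar> \<le> 2 \<Longrightarrow> \<bar>Tt - T\<bar> \<le> 1 \<Longrightarrow> \<bar>(A - Tt) - (1/2*N - T)/2\<bar> \<le> 3"
  by (simp add: abs_le_iff field_simps)

theorem theorem5p1:
  fixes \<tau> :: real
  assumes "0 \<le> \<tau>" and "\<tau> \<le> 1/2"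
  shows "R \<tau> \<le> ereal ((1/2) * (1 + h (1/2 - \<tau>) - (1/2 + \<tau>) * h ((2 * \<tau>) / (1/2 + \<tau>))))"
proof -
  note tau = assms
  define m where "m n = n div 2" for n :: nat
  define t0 where "t0 n = nat \<lceil>\<tau> * real n\<rceil>" for n :: nat
  define tt where "tt n = min (t0 n) (m n)" for n
  define a where "a n = (m n + tt n) div 2" for n
  define b where "b n = a n - tt n" for n
  define G where "G n = (log 2 (real (m n) + 1) + (real n - real (m n)) + real (m n) * h (real (b n) / real (m n))
      - real (a n) * h (real (tt n) / real (a n)) + log 2 (real (a n) + 1)) / real n" for n
  define L where "L = (1/2) * (1 + h (1/2 - \<tau>) - (1/2 + \<tau>) * h ((2 * \<tau>) / (1/2 + \<tau>)))"
  have ttm: "tt n \<le> m n" for n by (simp add: tt_def)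
  have tta: "tt n \<le> a n" for n using ttm[of n] by (simp add: a_def)
  have am: "a n \<le> m n" for n using ttm[of n] by (simp add: a_def)
  have bm: "b n \<le> m n" for n using am[of n] by (simp add: b_def)
  have mn: "m n \<le> n" for n by (simp add: m_def)
  have rb: "real (b n) = real (a n) - real (tt n)" for n using tta[of n] by (simp add: b_def of_nat_diff)
  have m_app: "\<bar>real (m n) - 1/2 * real n\<bar> \<le> 1" for n
  proof -
    have "2 * m n \<le> n" "n \<le> 2 * m n + 1" by (auto simp: m_def)
    hence "2 * real (m n) \<le> real n" "real n \<le> 2 * real (m n) + 1" by linarith+
    thus ?thesis by linarith
  qed
  have t_app: "\<bar>real (tt n) - \<tau> * real n\<bar> \<le> 1" for n
  proof -
    have c1: "\<tau> * real n \<le> real (t0 n)" "real (t0 n) < \<tau> * real n + 1"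
      using tau by (auto simp: t0_def) linarith+
    have "\<tau> * real n \<le> 1/2 * real n" using tau by (intro mult_right_mono) auto
    thus ?thesis using c1 m_app[of n] by (auto simp: tt_def min_def)
  qed
  have a_app: "\<bar>real (a n) - (1/2 + \<tau>)/2 * real n\<bar> \<le> 2" for n
  proof -
    have "2 * a n \<le> m n + tt n" "m n + tt n \<le> 2 * a n + 1" by (auto simp: a_def)
    hence "2 * real (a n) \<le> real (m n) + real (tt n)" "real (m n) + real (tt n) \<le> 2 * real (a n) + 1" by linarith+
    moreover have "(1/2 + \<tau>)/2 * real n = (1/2 * real n + \<tau> * real n) / 2" by (simp add: algebra_simps)
    ultimately show ?thesis using aux_a[OF _ _ m_app[of n] t_app[of n]] by simp
  qed
  have b_app: "\<bar>real (b n) - (1/4 - \<tau>/2) * real n\<bar> \<le> 3" for n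
  proof -
    have e1: "(1/2 + \<tau>)/2 * real n = (1/2 * real n + \<tau> * real n) / 2" by (simp add: algebra_simps)
    have e2: "(1/2 * real n - \<tau> * real n) / 2 = (1/4 - \<tau>/2) * real n" by (simp add: field_simps)
    have "\<bar>real (a n) - (1/2 * real n + \<tau> * real n) / 2\<bar> \<le> 2" using a_app[of n] unfolding e1 .
    from aux_b[OF this t_app[of n]] show ?thesis unfolding rb e2 .
  qed
  have lm: "(\<lambda>n. real (m n) / real n) \<longlonglongrightarrow> 1/2" by (rule lin_lim[OF m_app])
  have lt: "(\<lambda>n. real (tt n) / real n) \<longlonglongrightarrow> \<tau>" by (rule lin_lim[OF t_app])
  have la: "(\<lambda>n. real (a n) / real n) \<longlonglongrightarrow> (1/2 + \<tau>)/2" by (rule lin_lim[OF a_app])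
  have lb: "(\<lambda>n. real (b n) / real n) \<longlonglongrightarrow> 1/4 - \<tau>/2" by (rule lin_lim[OF b_app])
  have lbm: "(\<lambda>n. real (b n) / real (m n)) \<longlonglongrightarrow> 1/2 - \<tau>"
  proof -
    have l: "(\<lambda>n. (real (b n) / real n) / (real (m n) / real n)) \<longlonglongrightarrow> (1/4 - \<tau>/2) / (1/2)"
      by (rule tendsto_divide[OF lb lm]) simp
    have e: "\<forall>\<^sub>F n in sequentially. (real (b n) / real n) / (real (m n) / real n) = real (b n) / real (m n)"
      using eventually_gt_at_top[of "0::nat"] by eventually_elim simp
    have "(\<lambda>n. real (b n) / real (m n)) \<longlonglongrightarrow> (1/4 - \<tau>/2) / (1/2)"
      using l tendsto_cong[OF e] by simp
    moreover have "(1/4 - \<tau>/2) / (1/2) = 1/2 - \<tau>" by simp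
    ultimately show ?thesis by simp
  qed
  have lta: "(\<lambda>n. real (tt n) / real (a n)) \<longlonglongrightarrow> (2 * \<tau>) / (1/2 + \<tau>)"
  proof -
    have l: "(\<lambda>n. (real (tt n) / real n) / (real (a n) / real n)) \<longlonglongrightarrow> \<tau> / ((1/2 + \<tau>)/2)"
      by (rule tendsto_divide[OF lt la]) (use tau in simp)
    have e: "\<forall>\<^sub>F n in sequentially. (real (tt n) / real n) / (real (a n) / real n) = real (tt n) / real (a n)"
      using eventually_gt_at_top[of "0::nat"] by eventually_elim simp
    have "(\<lambda>n. real (tt n) / real (a n)) \<longlonglongrightarrow> \<tau> / ((1/2 + \<tau>)/2)"
      using l tendsto_cong[OF e] by simp
    moreover have "\<tau> / ((1/2 + \<tau>)/2) = (2 * \<tau>) / (1/2 + \<tau>)" by simp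
    ultimately show ?thesis by (simp add: mult.commute)
  qed
  have in01: "real x / real y \<in> {0..1}" if "x \<le> y" for x y :: nat
    using that by (cases "y = 0") auto
  have h1: "(\<lambda>n. h (real (b n) / real (m n))) \<longlonglongrightarrow> h (1/2 - \<tau>)"
    by (rule continuous_on_tendsto_compose[OF h_cont lbm]) (use tau in01 bm in auto)
  have h2: "(\<lambda>n. h (real (tt n) / real (a n))) \<longlonglongrightarrow> h ((2 * \<tau>) / (1/2 + \<tau>))"
    by (rule continuous_on_tendsto_compose[OF h_cont lta]) (use tau in01 tta in auto)
  have lG0: "(\<lambda>n. log 2 (real (m n) + 1) / real n + (1 - real (m n) / real n)
      + (real (m n) / real n) * h (real (b n) / real (m n))
      - (real (a n) / real n) * h (real (tt n) / real (a n)) + log 2 (real (a n) + 1) / real n)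
      \<longlonglongrightarrow> 0 + (1 - 1/2) + 1/2 * h (1/2 - \<tau>) - (1/2 + \<tau>)/2 * h ((2 * \<tau>) / (1/2 + \<tau>)) + 0"
    by (intro tendsto_intros log_lim lm la h1 h2 mn) (use am mn in \<open>auto intro: order_trans\<close>)
  have eG: "\<forall>\<^sub>F n in sequentially. log 2 (real (m n) + 1) / real n + (1 - real (m n) / real n)
      + (real (m n) / real n) * h (real (b n) / real (m n))
      - (real (a n) / real n) * h (real (tt n) / real (a n)) + log 2 (real (a n) + 1) / real n = G n"
    using eventually_gt_at_top[of "0::nat"] by eventually_elim (simp add: G_def field_simps)
  have lG: "G \<longlonglongrightarrow> L"
  proof -
    have "0 + (1 - 1/2) + 1/2 * h (1/2 - \<tau>) - (1/2 + \<tau>)/2 * h ((2 * \<tau>) / (1/2 + \<tau>)) + 0 = L"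
      by (simp add: L_def field_simps)
    thus ?thesis using lG0 tendsto_cong[OF eG] by simp
  qed
  have step: "\<forall>\<^sub>F n in sequentially. ereal (log 2 (real (M n (nat \<lceil>\<tau> * real n\<rceil>))) / real n) \<le> ereal (G n)"
    using eventually_ge_at_top[of "4::nat"]
  proof eventually_elim
    fix n :: nat assume n4: "4 \<le> n"
    have mpos: "2 \<le> m n" using n4 by (simp add: m_def)
    have apos: "0 < a n" using mpos by (simp add: a_def)
    define F where "F = fB (m n) (tt n) (a n)"
    have Mb: "real (M n (t0 n)) \<le> (real (m n) + 1) * 2^(n - m n) * F"
      using M_bound(1)[of n "t0 n"] by (simp add: m_def tt_def a_def F_def)
    have M1: "1 \<le> real (M n (t0 n))" using M_bound(2)[of n "t0 n"] by simp
    have F1: "1 \<le> F" using fB_le[of "tt n" "tt n" "m n"] ttm[of n] by (simp add: F_def fB_def a_def)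
    have Cm: "0 < real (m n choose b n)" using bm[of n] by simp
    have Ca: "0 < real (a n choose tt n)" using tta[of n] by simp
    have "log 2 (real (M n (t0 n))) \<le> log 2 ((real (m n) + 1) * 2^(n - m n) * F)"
      using Mb M1 by (subst log_le_cancel_iff) auto
    also have "\<dots> = log 2 (real (m n) + 1) + (real n - real (m n)) + log 2 F"
      using F1 mn[of n] by (simp add: log_mult log_nat_power of_nat_diff)
    finally have L1: "log 2 (real (M n (t0 n))) \<le> log 2 (real (m n) + 1) + (real n - real (m n)) + log 2 F" .
    have L2: "log 2 F = log 2 (real (m n choose b n)) - log 2 (real (a n choose tt n))"
      unfolding F_def fB_def b_def[symmetric] using Cm Ca by (simp add: log_divide)
    have L3: "log 2 (real (m n choose b n)) \<le> real (m n) * h (real (b n) / real (m n))"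
      using E1[OF bm[of n]] .
    have L4: "real (a n) * h (real (tt n) / real (a n)) - log 2 (real (a n) + 1) \<le> log 2 (real (a n choose tt n))"
      using E2[OF tta[of n] apos] .
    have Geq: "G n * real n = log 2 (real (m n) + 1) + (real n - real (m n)) + real (m n) * h (real (b n) / real (m n))
      - real (a n) * h (real (tt n) / real (a n)) + log 2 (real (a n) + 1)"
      using n4 by (simp add: G_def)
    have "log 2 (real (M n (t0 n))) \<le> G n * real n"
      using L1 L2 L3 L4 Geq by linarith
    hence "log 2 (real (M n (t0 n))) / real n \<le> G n" using n4 by (simp add: field_simps)
    thus "ereal (log 2 (real (M n (nat \<lceil>\<tau> * real n\<rceil>))) / real n) \<le> ereal (G n)"
      by (simp add: t0_def)
  qed
  have "R \<tau> \<le> limsup (\<lambda>n. ereal (G n))"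
    unfolding R_def by (rule Limsup_mono[OF step])
  also have "limsup (\<lambda>n. ereal (G n)) = ereal L"
    by (rule lim_imp_Limsup) (use lG in auto)
  finally show ?thesis by (simp add: L_def)
qed


end
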